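(* Let $n\neq 5$. Then $V(n,2)=\bigcup_{l=1}^{\lfloor n/2\rfloor}W_l$, and this union is a mutually disjoint union of the $W_l$.
   Context: Let $S=K[x_1,\ldots,x_n]$ over a field $K$; $G(I)$ is the minimal monomial generating set of a monomial ideal $I$. With $\sigma$ the bijection $x_{i_1}\cdots x_{i_k}\mapsto\{i_1,\ldots,i_k\}$ from square-free monomials to subsets of $[n]$, the facet complex $\delta_{\mathcal{F}}(I)$ has facets $\sigma(g)$, $g\in G(I)$, the Stanley–Reisner complex is $\delta_{\mathcal{N}}(I)=\{\sigma(g)\mid g \text{ square-free monomial},\ g\notin I\}$, and a square-free monomial ideal $I$ is an $f$-ideal if both complexes have the same $f$-vector. $V(n,2)$ is the set of $f$-ideals of $S$ all of whose minimal generators have degree $2$. For a nonempty proper $B\subset[n]$ with complement $\overline B$, $W_B=\{x_ix_j\mid i\neq j,\ i,j\in B\text{ or } i,j\in\overline B\}$. An $f$-ideal $I$ with $G(I)$ consisting of square-free monomials of degree 2 is of $l$ type if $W_B\subseteq G(I)$ for some $B\subseteq[n]$ with $|B|=l$; $W_l$ denotes the set of $f$-ideals of $S$ of $l$ type. *)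

theory Defs
  imports Main
begin

text \<open>Monomials of S = K[x_1,...,x_n] are represented by their exponent vectors
  a :: nat \<Rightarrow> nat with support in {1..n}.  A monomial ideal is determined by the set
  of monomials it contains, i.e. a set of exponent vectors closed under multiplication
  by monomials (upward closed for the divisibility order).\<close>

type_synonym monomial = "nat \<Rightarrow> nat"

definition monomials :: "nat \<Rightarrow> monomial set" where
  "monomials n = {a. \<forall>i. i \<notin> {1..n} \<longrightarrow> a i = 0}"

definition mdvd :: "monomial \<Rightarrow> monomial \<Rightarrow> bool" where
  "mdvd a b \<longleftrightarrow> (\<forall>i. a i \<le> b i)"

definition monomial_ideal :: "nat \<Rightarrow> monomial set \<Rightarrow> bool" where
  "monomial_ideal n I \<longleftrightarrow> I \<subseteq> monomials n \<and>
     (\<forall>a\<in>I. \<forall>b\<in>monomials n. mdvd a b \<longrightarrow> b \<in> I)"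

definition mingens :: "monomial set \<Rightarrow> monomial set" where
  "mingens I = {a\<in>I. \<forall>b\<in>I. mdvd b a \<longrightarrow> b = a}"

definition squarefree_mono :: "monomial \<Rightarrow> bool" where
  "squarefree_mono a \<longleftrightarrow> (\<forall>i. a i \<le> 1)"

definition mdeg :: "nat \<Rightarrow> monomial \<Rightarrow> nat" where
  "mdeg n a = (\<Sum>i\<in>{1..n}. a i)"

definition sqfree_monomial_ideal :: "nat \<Rightarrow> monomial set \<Rightarrow> bool" where
  "sqfree_monomial_ideal n I \<longleftrightarrow> monomial_ideal n I \<and> (\<forall>g\<in>mingens I. squarefree_mono g)"

definition sigma :: "monomial \<Rightarrow> nat set" where
  "sigma a = {i. a i \<noteq> 0}"

definition facet_complex :: "monomial set \<Rightarrow> nat set set" where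
  "facet_complex I = {F. \<exists>g\<in>mingens I. F \<subseteq> sigma g}"

definition SR_complex :: "nat \<Rightarrow> monomial set \<Rightarrow> nat set set" where
  "SR_complex n I = {sigma g | g. g \<in> monomials n \<and> squarefree_mono g \<and> g \<notin> I}"

text \<open>f-vector: number of faces with k vertices (k = 0 accounts for the empty face f_{-1}).\<close>
definition fvec :: "nat set set \<Rightarrow> nat \<Rightarrow> nat" where
  "fvec D k = card {F\<in>D. card F = k}"

definition f_ideal :: "nat \<Rightarrow> monomial set \<Rightarrow> bool" where
  "f_ideal n I \<longleftrightarrow> sqfree_monomial_ideal n I \<and>
     (\<forall>k. fvec (facet_complex I) k = fvec (SR_complex n I) k)"

definition V :: "nat \<Rightarrow> nat \<Rightarrow> monomial set set" where
  "V n d = {I. f_ideal n I \<and> (\<forall>g\<in>mingens I. mdeg n g = d)}"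

definition xx :: "nat \<Rightarrow> nat \<Rightarrow> monomial" where
  "xx i j = (\<lambda>k. if k = i \<or> k = j then 1 else 0)"

definition W_B :: "nat \<Rightarrow> nat set \<Rightarrow> monomial set" where
  "W_B n B = {xx i j | i j. i \<noteq> j \<and>
      ((i \<in> B \<and> j \<in> B) \<or> (i \<in> {1..n} - B \<and> j \<in> {1..n} - B))}"

definition l_type :: "nat \<Rightarrow> nat \<Rightarrow> monomial set \<Rightarrow> bool" where
  "l_type n l I \<longleftrightarrow> (\<exists>B. B \<subseteq> {1..n} \<and> B \<noteq> {} \<and> B \<noteq> {1..n} \<and> card B = l \<and>
      W_B n B \<subseteq> mingens I)"

definition W :: "nat \<Rightarrow> nat \<Rightarrow> monomial set set" where
  "W n l = {I. f_ideal n I \<and> (\<forall>g\<in>mingens I. squarefree_mono g \<and> mdeg n g = 2) \<and> l_type n l I}"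

end

theory Submission
  imports Defs
begin


lemma arith_main:
  fixes a b T E c n :: nat
  assumes "c = T + 2*E" "2*c = n*(n-1)" "n = a+b" "T + E \<le> a*b" "E + b \<le> a*b"
  shows "(a = b \<or> a = b+1) \<and> T + E = a*b \<and> E + b = a*b"
proof -
  have i1: "int c = int T + 2*int E" "2*int c = int n*(int n - 1)" "int n = int a + int b"
    "int T + int E \<le> int a * int b" "int E + int b \<le> int a * int b"
  proof -
    have e: "int (n*(n-1)) = int n * (int n - 1)" by (cases n) (auto simp: algebra_simps)
    have "int (2*c) = int (n*(n-1))" using assms(2) by simp
    thus "2*int c = int n*(int n - 1)" using e by simp
    have "int (T+E) \<le> int (a*b)" using assms(4) by (simp only: of_nat_le_iff)
    thus "int T + int E \<le> int a * int b" by simp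
    have "int (E+b) \<le> int (a*b)" using assms(5) by (simp only: of_nat_le_iff)
    thus "int E + int b \<le> int a * int b" by simp
  qed (use assms in auto)
  have key: "(int a - int b)*(int a - int b) \<le> int a - int b"
  proof -
    have "2*int c \<le> 4 * int a * int b - 2*int b" using i1 by linarith
    hence "(int a + int b)*(int a + int b - 1) \<le> 4 * int a * int b - 2*int b" using i1 by simp
    thus ?thesis by (simp add: algebra_simps)
  qed
  define d where "d = int a - int b"
  have "d*d \<le> d" using key d_def by simp
  hence d01: "d = 0 \<or> d = 1"
  proof -
    have "d \<ge> 2 \<Longrightarrow> d*d \<ge> 2*d" by (simp add: mult_right_mono)
    moreover have "d \<le> -1 \<Longrightarrow> d*d \<ge> 0" by simp
    ultimately show ?thesis using \<open>d*d \<le> d\<close> by linarith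
  qed
  hence "(int a - int b)*(int a - int b) = int a - int b" using d_def by auto
  hence "(int a + int b)*(int a + int b - 1) = 4 * int a * int b - 2*int b"
    by (simp add: algebra_simps)
  hence "2*int c = 4 * int a * int b - 2*int b" using i1 by simp
  hence "int T + int E = int a * int b \<and> int E + int b = int a * int b" using i1 by linarith
  thus ?thesis using d01 d_def by (auto simp flip: of_nat_mult)
qed



lemma bip_lemma:
  fixes V :: "'a set" and R :: "('a\<times>'a) set"
  assumes fin: "finite V" and RV: "R \<subseteq> V \<times> V"
  and sym: "\<And>x y. (x,y)\<in>R \<Longrightarrow> (y,x)\<in>R"
  and irr: "\<And>x. (x,x) \<notin> R"
  and tri: "\<And>x y z. (x,y)\<in>R \<Longrightarrow> (y,z)\<in>R \<Longrightarrow> (x,z)\<in>R \<Longrightarrow> False"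
  and cnt: "2 * card R = card V * (card V - 1)"
  and n5: "card V \<noteq> 5"
  and ne: "R \<noteq> {}"
  shows "\<exists>A B. A \<union> B = V \<and> A \<inter> B = {} \<and> A \<noteq> {} \<and> B \<noteq> {} \<and>
     (\<forall>x\<in>A. \<forall>y\<in>A. (x,y)\<notin>R) \<and> (\<forall>x\<in>B. \<forall>y\<in>B. (x,y)\<notin>R)"
proof -
  define N where "N x = {y. (x,y)\<in>R}" for x
  have NV: "N x \<subseteq> V" for x using RV by (auto simp: N_def)
  have finN: "finite (N x)" for x using NV fin finite_subset by blast
  define d where "d x = card (N x)" for x
  obtain p q where pq: "(p,q) \<in> R" using ne by auto
  have pV: "p \<in> V" using pq RV by auto
  have Vne: "V \<noteq> {}" using pV by auto
  define M where "M = Max (d ` V)"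
  have "M \<in> d ` V" unfolding M_def using fin Vne by (intro Max_in) auto
  then obtain v where vV: "v \<in> V" and dv: "d v = M" by auto
  have dmax: "d x \<le> d v" if "x \<in> V" for x
  proof -
    have "d x \<le> Max (d ` V)" using that fin by (intro Max_ge) auto
    thus ?thesis using dv M_def by simp
  qed
  define B where "B = N v"
  define A where "A = V - B"
  have BV: "B \<subseteq> V" using NV B_def by auto
  have Bind: "x\<in>B \<Longrightarrow> y\<in>B \<Longrightarrow> (x,y)\<notin>R" for x y
    using tri[of v x y] unfolding B_def N_def by auto
  have vA: "v \<in> A" using irr vV unfolding A_def B_def N_def by auto
  define a where "a = card A"
  define b where "b = card B"
  have finA: "finite A" and finB: "finite B" using fin BV finite_subset unfolding A_def by auto
  have nab: "card V = a + b" unfolding a_def b_def A_def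
    using card_Diff_subset[OF finB BV] card_mono[OF fin BV] by simp
  have bdv: "b = d v" unfolding b_def d_def B_def by simp
  define dA where "dA x = card (N x \<inter> A)" for x
  define dB where "dB x = card (N x \<inter> B)" for x
  have dsplit: "d x = dA x + dB x" for x
  proof -
    have "N x = (N x \<inter> A) \<union> (N x \<inter> B)" using NV[of x] unfolding A_def by auto
    moreover have "(N x \<inter> A) \<inter> (N x \<inter> B) = {}" unfolding A_def by auto
    ultimately show ?thesis unfolding d_def dA_def dB_def
      using card_Un_disjoint finN by (metis finite_Int)
  qed
  have dBB: "dB x = 0" if "x \<in> B" for x
  proof -
    have "N x \<inter> B = {}" using Bind that unfolding N_def by auto
    thus ?thesis unfolding dB_def by simp
  qed
  have dBle: "dB x \<le> b" for x unfolding dB_def b_def using finB by (intro card_mono) auto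
  have cardR: "card R = (\<Sum>x\<in>V. d x)"
  proof -
    have "R = Sigma V N" using RV unfolding N_def by auto
    thus ?thesis unfolding d_def using fin finN by simp
  qed
  have cross: "(\<Sum>x\<in>B. dA x) = (\<Sum>x\<in>A. dB x)"
  proof -
    have e1: "R \<inter> (B \<times> A) = Sigma B (\<lambda>x. N x \<inter> A)" unfolding N_def by auto
    have e2: "R \<inter> (A \<times> B) = Sigma A (\<lambda>x. N x \<inter> B)" unfolding N_def by auto
    have "card (R \<inter> (B \<times> A)) = (\<Sum>x\<in>B. dA x)" unfolding e1 dA_def using finB finN by simp
    moreover have "card (R \<inter> (A \<times> B)) = (\<Sum>x\<in>A. dB x)" unfolding e2 dB_def using finA finN by simp
    moreover have "card (R \<inter> (B \<times> A)) = card (R \<inter> (A \<times> B))"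
    proof -
      have "(\<lambda>(x,y). (y,x)) ` (R \<inter> (A \<times> B)) = R \<inter> (B \<times> A)"
        using sym by (auto simp: image_iff)
      moreover have "inj_on (\<lambda>(x,y). (y,x)) (R \<inter> (A \<times> B))" by (auto simp: inj_on_def)
      ultimately show ?thesis by (metis card_image)
    qed
    ultimately show ?thesis by simp
  qed
  define T where "T = (\<Sum>x\<in>A. dA x)"
  define E where "E = (\<Sum>x\<in>A. dB x)"
  have VAB: "V = A \<union> B" and ABd: "A \<inter> B = {}" using BV unfolding A_def by auto
  have cR: "card R = T + 2*E"
  proof -
    have "card R = (\<Sum>x\<in>A. d x) + (\<Sum>x\<in>B. d x)"
      unfolding cardR VAB using finA finB ABd by (simp add: sum.union_disjoint)
    also have "(\<Sum>x\<in>A. d x) = T + E" unfolding T_def E_def dsplit by (simp add: sum.distrib)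
    also have "(\<Sum>x\<in>B. d x) = (\<Sum>x\<in>B. dA x)" unfolding dsplit using dBB by simp
    finally show ?thesis using cross E_def by simp
  qed
  have h1: "T + E \<le> a*b"
  proof -
    have "T + E = (\<Sum>x\<in>A. d x)" unfolding T_def E_def dsplit by (simp add: sum.distrib)
    also have "\<dots> \<le> (\<Sum>x\<in>A. b)" using dmax bdv VAB by (intro sum_mono) auto
    finally show ?thesis unfolding a_def by simp
  qed
  have noA: "\<forall>x\<in>A. \<forall>y\<in>A. (x,y)\<notin>R"
  proof (rule ccontr)
    assume "\<not> ?thesis"
    then obtain x y where xA: "x\<in>A" and yA: "y\<in>A" and xy: "(x,y)\<in>R" by auto
    have xney: "x \<noteq> y" using xy irr by auto
    have dBxy: "dB x + dB y \<le> b"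
    proof -
      have "(N x \<inter> B) \<inter> (N y \<inter> B) = {}" using tri[of x y] xy unfolding N_def by auto
      hence "card ((N x \<inter> B) \<union> (N y \<inter> B)) = dB x + dB y" unfolding dB_def
        using finN by (simp add: card_Un_disjoint)
      moreover have "card ((N x \<inter> B) \<union> (N y \<inter> B)) \<le> b" unfolding b_def using finB
        by (intro card_mono) auto
      ultimately show ?thesis by simp
    qed
    define A' where "A' = A - {x,y}"
    have cA': "card A' = a - 2" unfolding A'_def a_def using xA yA xney finA by simp
    have a2: "a \<ge> 2"
    proof -
      have "card {x,y} \<le> card A" using xA yA finA by (intro card_mono) auto
      thus ?thesis using xney unfolding a_def by simp
    qed
    have finA': "finite A'" using finA A'_def by auto
    have xA': "x \<notin> A'" "y \<notin> A'" using A'_def by auto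
    have Esplit: "E = dB x + dB y + (\<Sum>z\<in>A'. dB z)"
    proof -
      have eqA: "A = insert x (insert y A')" using xA yA unfolding A'_def by auto
      have "E = (\<Sum>z\<in>insert x (insert y A'). dB z)" unfolding E_def by (simp only: eqA[symmetric])
      also have "\<dots> = dB x + dB y + (\<Sum>z\<in>A'. dB z)" using finA' xney xA'
        by (simp add: add.assoc)
      finally show ?thesis .
    qed
    have sA'le: "(\<Sum>z\<in>A'. dB z) \<le> (\<Sum>z\<in>A'. b)" using dBle by (intro sum_mono) auto
    hence sA'le2: "(\<Sum>z\<in>A'. dB z) \<le> (a-2)*b" using cA' by simp
    have abeq: "a*b = (a-2)*b + 2*b"
    proof -
      obtain k where "a = k + 2" using a2 by (metis le_add_diff_inverse2)
      thus ?thesis by (simp add: algebra_simps)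
    qed
    have h2: "E + b \<le> a*b"
    proof -
      have "E + b \<le> b + (a-2)*b + b" using Esplit dBxy sA'le2 by linarith
      also have "\<dots> = a*b"
      proof -
        obtain k where "a = k + 2" using a2 by (metis le_add_diff_inverse2)
        thus ?thesis by (simp add: algebra_simps)
      qed
      finally show ?thesis .
    qed
    have ar: "(a = b \<or> a = b+1) \<and> T + E = a*b \<and> E + b = a*b"
      using arith_main[OF cR cnt nab h1 h2] .
    have allA: "dA z + dB z = b" if "z \<in> A" for z
    proof -
      have "(\<Sum>z\<in>A. dA z + dB z) = T + E" unfolding T_def E_def by (simp add: sum.distrib)
      also have "\<dots> = a*b" using ar by blast
      also have "\<dots> = (\<Sum>z\<in>A. b)" unfolding a_def by simp
      finally have s: "(\<Sum>z\<in>A. dA z + dB z) = (\<Sum>z\<in>A. b)" .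
      have le: "\<And>z. z\<in>A \<Longrightarrow> dA z + dB z \<le> b"
      proof -
        fix z assume "z \<in> A"
        hence "z \<in> V" using VAB by blast
        hence "d z \<le> d v" by (rule dmax)
        thus "dA z + dB z \<le> b" using bdv dsplit[of z] by simp
      qed
      show ?thesis using sum_mono_inv[of "\<lambda>z. dA z + dB z" A "\<lambda>_. b", OF s le that finA] by simp
    qed
    have sA'eq: "(\<Sum>z\<in>A'. dB z) = (\<Sum>z\<in>A'. b)"
    proof -
      have "(\<Sum>z\<in>A'. dB z) \<ge> (a-2)*b" using ar Esplit dBxy abeq by linarith
      thus ?thesis using sA'le2 cA' by simp
    qed
    have dA0: "dA z = 0" if "z \<in> A'" for z
    proof -
      have "dB z = b" using sum_mono_inv[OF sA'eq] dBle that finA' by auto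
      thus ?thesis using allA[of z] that A'_def by auto
    qed
    have Nx: "N x \<inter> A = {y}"
    proof
      show "{y} \<subseteq> N x \<inter> A" using xy yA unfolding N_def by auto
      show "N x \<inter> A \<subseteq> {y}"
      proof
        fix w assume w: "w \<in> N x \<inter> A"
        have "x \<in> N w \<inter> A" using w sym xA unfolding N_def by auto
        hence "dA w \<noteq> 0" unfolding dA_def using finN by auto
        hence "w \<notin> A'" using dA0 by auto
        moreover have "w \<noteq> x" using w irr unfolding N_def by auto
        ultimately show "w \<in> {y}" using w A'_def by auto
      qed
    qed
    have Ny: "N y \<inter> A = {x}"
    proof
      show "{x} \<subseteq> N y \<inter> A" using xy xA sym unfolding N_def by auto
      show "N y \<inter> A \<subseteq> {x}"
      proof
        fix w assume w: "w \<in> N y \<inter> A"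
        have "y \<in> N w \<inter> A" using w sym yA unfolding N_def by auto
        hence "dA w \<noteq> 0" unfolding dA_def using finN by auto
        hence "w \<notin> A'" using dA0 by auto
        moreover have "w \<noteq> y" using w irr unfolding N_def by auto
        ultimately show "w \<in> {x}" using w A'_def by auto
      qed
    qed
    have T2: "T = 2"
    proof -
      have eqA: "A = insert x (insert y A')" using xA yA unfolding A'_def by auto
      have "T = (\<Sum>z\<in>insert x (insert y A'). dA z)" unfolding T_def by (simp only: eqA[symmetric])
      also have "\<dots> = dA x + dA y + (\<Sum>z\<in>A'. dA z)" using finA' xney xA'
        by (simp add: add.assoc)
      finally have "T = dA x + dA y + (\<Sum>z\<in>A'. dA z)" .
      thus ?thesis using dA0 Nx Ny unfolding dA_def by simp
    qed
    have b2: "b = 2" using ar T2 by linarith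
    have "card V = 4" using ar b2 nab n5 by auto
    hence a2': "a = 2" using nab b2 by simp
    have "v \<noteq> x"
    proof
      assume "v = x"
      hence "y \<in> B" using xy unfolding B_def N_def by auto
      thus False using yA A_def by auto
    qed
    moreover have "v \<noteq> y"
    proof
      assume "v = y"
      hence "x \<in> B" using xy sym unfolding B_def N_def by auto
      thus False using xA A_def by auto
    qed
    ultimately have "card {v,x,y} = 3" using xney by auto
    moreover have "card {v,x,y} \<le> a" unfolding a_def using vA xA yA finA by (intro card_mono) auto
    ultimately show False using a2' by simp
  qed
  have Bne: "B \<noteq> {}"
  proof -
    have "q \<in> N p" using pq N_def by auto
    hence "d p \<ge> 1" unfolding d_def using finN by (metis card_0_eq empty_iff less_one not_le)
    hence "b \<ge> 1" using dmax[OF pV] bdv by simp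
    thus ?thesis unfolding b_def by auto
  qed
  show ?thesis
    apply (rule exI[of _ A], rule exI[of _ B])
    using VAB ABd vA Bne noA Bind by auto
qed



lemma arith_cross:
  fixes p q r s c :: nat
  assumes "2*c \<le> 4*p*s + 4*q*r" "2*c = n*(n-1)" "n = p+q+r+s" "p+s \<ge> 1" "q+r \<ge> 1" "n \<ge> 3"
  shows False
proof -
  define X where "X = int p + int s"
  define Y where "Y = int q + int r"
  have e: "int (n*(n-1)) = int n * (int n - 1)" by (cases n) (auto simp: algebra_simps)
  have "int n * (int n - 1) = int (n*(n-1))" by (rule e[symmetric])
  also have "\<dots> \<le> int (4*p*s + 4*q*r)" using assms(1,2) by (simp only: of_nat_le_iff)
  also have "\<dots> = 4*int p*int s + 4*int q*int r" by simp
  finally have h: "int n * (int n - 1) \<le> 4*int p*int s + 4*int q*int r" .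
  have "0 \<le> (int p - int s)*(int p - int s)" by simp
  hence h1: "4*int p*int s \<le> X*X" unfolding X_def by (simp add: algebra_simps)
  have "0 \<le> (int q - int r)*(int q - int r)" by simp
  hence h2: "4*int q*int r \<le> Y*Y" unfolding Y_def by (simp add: algebra_simps)
  have n: "int n = X + Y" using assms(3) X_def Y_def by simp
  have "(X+Y)*(X+Y-1) \<le> X*X + Y*Y" using h h1 h2 n by simp
  hence k: "2*X*Y \<le> X + Y" by (simp add: algebra_simps)
  have X1: "X \<ge> 1" and Y1: "Y \<ge> 1" using assms(4,5) X_def Y_def by auto
  have "0 \<le> (X-1)*(Y-1)" using X1 Y1 by simp
  hence "2*X*Y \<ge> 2*X + 2*Y - 2" by (simp add: algebra_simps)
  moreover have "X + Y \<ge> 3" using n assms(6) by simp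
  ultimately show False using k by linarith
qed

lemma cross_unique:
  fixes V :: "'a set" and R :: "('a\<times>'a) set"
  assumes fin: "finite V" and RV: "R \<subseteq> V \<times> V"
  and c1: "\<And>x y. (x,y)\<in>R \<Longrightarrow> (x\<in>B1 \<longleftrightarrow> y\<notin>B1)"
  and c2: "\<And>x y. (x,y)\<in>R \<Longrightarrow> (x\<in>B2 \<longleftrightarrow> y\<notin>B2)"
  and cnt: "2 * card R = card V * (card V - 1)"
  and n3: "card V \<ge> 3"
  shows "(\<forall>x\<in>V. x\<in>B1 \<longleftrightarrow> x\<in>B2) \<or> (\<forall>x\<in>V. x\<in>B1 \<longleftrightarrow> x\<notin>B2)"
proof (rule ccontr)
  assume H: "\<not> ?thesis"
  define P where "P = {x\<in>V. x\<in>B1 \<and> x\<in>B2}"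
  define S where "S = {x\<in>V. x\<notin>B1 \<and> x\<notin>B2}"
  define Q where "Q = {x\<in>V. x\<in>B1 \<and> x\<notin>B2}"
  define Q' where "Q' = {x\<in>V. x\<notin>B1 \<and> x\<in>B2}"
  have fins: "finite P" "finite S" "finite Q" "finite Q'" using fin unfolding P_def S_def Q_def Q'_def by auto
  have sub: "R \<subseteq> (P\<times>S \<union> S\<times>P) \<union> (Q\<times>Q' \<union> Q'\<times>Q)"
  proof
    fix z assume z: "z \<in> R"
    obtain x y where zxy: "z = (x,y)" by (cases z)
    have "x \<in> V" "y \<in> V" using z zxy RV by auto
    thus "z \<in> (P\<times>S \<union> S\<times>P) \<union> (Q\<times>Q' \<union> Q'\<times>Q)"
      using c1[of x y] c2[of x y] z zxy unfolding P_def S_def Q_def Q'_def by auto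
  qed
  have "card R \<le> card ((P\<times>S \<union> S\<times>P) \<union> (Q\<times>Q' \<union> Q'\<times>Q))"
    using sub fins by (intro card_mono) auto
  also have "\<dots> \<le> card (P\<times>S) + card (S\<times>P) + (card (Q\<times>Q') + card (Q'\<times>Q))"
  proof -
    have u1: "card (P\<times>S \<union> S\<times>P) \<le> card (P\<times>S) + card (S\<times>P)" by (rule card_Un_le)
    have u2: "card (Q\<times>Q' \<union> Q'\<times>Q) \<le> card (Q\<times>Q') + card (Q'\<times>Q)" by (rule card_Un_le)
    have u3: "card ((P\<times>S \<union> S\<times>P) \<union> (Q\<times>Q' \<union> Q'\<times>Q)) \<le> card (P\<times>S \<union> S\<times>P) + card (Q\<times>Q' \<union> Q'\<times>Q)" by (rule card_Un_le)
    show ?thesis using u1 u2 u3 by linarith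
  qed
  also have "\<dots> = 2*(card P * card S) + 2*(card Q * card Q')" by (simp add: card_cartesian_product)
  finally have cR: "2 * card R \<le> 4*card P*card S + 4*card Q*card Q'" by simp
  have "V = (P \<union> S) \<union> (Q \<union> Q')" unfolding P_def S_def Q_def Q'_def by auto
  moreover have "card (P \<union> S) = card P + card S" using fins
    by (intro card_Un_disjoint) (auto simp: P_def S_def)
  moreover have "card (Q \<union> Q') = card Q + card Q'" using fins
    by (intro card_Un_disjoint) (auto simp: Q_def Q'_def)
  moreover have "card ((P \<union> S) \<union> (Q \<union> Q')) = card (P \<union> S) + card (Q \<union> Q')" using fins
    by (intro card_Un_disjoint) (auto simp: P_def S_def Q_def Q'_def)
  ultimately have cV: "card V = card P + card Q + card Q' + card S" by simp
  have PS: "card P + card S \<ge> 1"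
  proof -
    obtain x where "x \<in> V" "\<not>(x\<in>B1 \<longleftrightarrow> x\<notin>B2)" using H by auto
    hence "x \<in> P \<union> S" unfolding P_def S_def by auto
    hence "P \<noteq> {} \<or> S \<noteq> {}" by auto
    hence "card P > 0 \<or> card S > 0" using fins by (auto simp: card_gt_0_iff)
    thus ?thesis by linarith
  qed
  have QQ: "card Q + card Q' \<ge> 1"
  proof -
    obtain x where "x \<in> V" "\<not>(x\<in>B1 \<longleftrightarrow> x\<in>B2)" using H by auto
    hence "x \<in> Q \<union> Q'" unfolding Q_def Q'_def by auto
    hence "Q \<noteq> {} \<or> Q' \<noteq> {}" by auto
    hence "card Q > 0 \<or> card Q' > 0" using fins by (auto simp: card_gt_0_iff)
    thus ?thesis by linarith
  qed
  show False by (rule arith_cross[OF cR cnt cV PS QQ n3])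
qed



definition ind :: "nat set \<Rightarrow> monomial" where "ind F = (\<lambda>k. if k \<in> F then 1 else 0)"

lemma xx_ind: "xx i j = ind {i,j}" by (auto simp: xx_def ind_def)
lemma xx_sym: "xx i j = xx j i" by (auto simp: xx_def)
lemma ind_monos: "F \<subseteq> {1..n} \<Longrightarrow> ind F \<in> monomials n"
  by (auto simp: ind_def monomials_def)
lemma sigma_ind[simp]: "sigma (ind F) = F" by (auto simp: sigma_def ind_def)
lemma sqf_ind: "squarefree_mono g \<Longrightarrow> g = ind (sigma g)"
proof
  fix k assume "squarefree_mono g"
  hence "g k \<le> 1" by (auto simp: squarefree_mono_def)
  thus "g k = ind (sigma g) k" by (auto simp: ind_def sigma_def)
qed
lemma sqf_ind2: "squarefree_mono (ind F)" by (auto simp: squarefree_mono_def ind_def)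
lemma sigma_sub: "g \<in> monomials n \<Longrightarrow> sigma g \<subseteq> {1..n}"
  by (auto simp: monomials_def sigma_def)
lemma mdeg_ind: "F \<subseteq> {1..n} \<Longrightarrow> mdeg n (ind F) = card F"
proof -
  assume F: "F \<subseteq> {1..n}"
  have "mdeg n (ind F) = (\<Sum>i\<in>{1..n}. if i \<in> F then 1 else 0)" by (simp add: mdeg_def ind_def)
  also have "\<dots> = card {i\<in>{1..n}. i \<in> F}" by (simp add: sum.inter_filter[symmetric])
  also have "{i\<in>{1..n}. i \<in> F} = F" using F by auto
  finally show ?thesis .
qed
lemma mdeg_xx: "i \<noteq> j \<Longrightarrow> i \<in> {1..n} \<Longrightarrow> j \<in> {1..n} \<Longrightarrow> mdeg n (xx i j) = 2"
  unfolding xx_ind by (subst mdeg_ind) auto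
lemma xx_monos: "i \<in> {1..n} \<Longrightarrow> j \<in> {1..n} \<Longrightarrow> xx i j \<in> monomials n"
  unfolding xx_ind by (rule ind_monos) auto

lemma mono_eq:
  assumes "b \<in> monomials n" "c \<in> monomials n" "mdvd c b" "mdeg n c = mdeg n b"
  shows "c = b"
proof
  fix i
  show "c i = b i"
  proof (cases "i \<in> {1..n}")
    case True
    have "\<And>k. k \<in> {1..n} \<Longrightarrow> c k \<le> b k" using assms(3) by (auto simp: mdvd_def)
    thus ?thesis using sum_mono_inv[of c "{1..n}" b i] assms(4) True by (auto simp: mdeg_def)
  next
    case False
    thus ?thesis using assms(1,2) by (auto simp: monomials_def)
  qed
qed

lemma mdeg_mono: "mdvd c b \<Longrightarrow> mdeg n c \<le> mdeg n b"
  unfolding mdeg_def mdvd_def by (intro sum_mono) auto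

lemma gen_below:
  assumes I: "monomial_ideal n I" and a: "a \<in> I"
  shows "\<exists>g\<in>mingens I. mdvd g a"
proof -
  let ?P = "\<lambda>b. b \<in> I \<and> mdvd b a"
  have "?P a" using a by (simp add: mdvd_def)
  then obtain g where g: "?P g" and gm: "\<forall>y. ?P y \<longrightarrow> mdeg n g \<le> mdeg n y"
    using ex_has_least_nat[of ?P a "mdeg n"] by blast
  have "g \<in> mingens I"
    unfolding mingens_def
  proof (intro CollectI conjI ballI impI)
    show "g \<in> I" using g by simp
    fix b assume b: "b \<in> I" "mdvd b g"
    have "mdvd b a" using b(2) g by (auto simp: mdvd_def intro: le_trans)
    hence "mdeg n g \<le> mdeg n b" using gm b by auto
    moreover have "mdeg n b \<le> mdeg n g" using b(2) by (rule mdeg_mono)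
    moreover have "b \<in> monomials n" "g \<in> monomials n" using I b g by (auto simp: monomial_ideal_def)
    ultimately show "b = g" using mono_eq b(2) by (metis le_antisym)
  qed
  thus ?thesis using g by auto
qed

lemma V_mi: "I \<in> V n 2 \<Longrightarrow> monomial_ideal n I"
  by (simp add: V_def f_ideal_def sqfree_monomial_ideal_def)

lemma V_gen:
  assumes V: "I \<in> V n 2" and g: "g \<in> mingens I"
  shows "\<exists>i j. i\<noteq>j \<and> i\<in>{1..n} \<and> j\<in>{1..n} \<and> g = xx i j"
proof -
  have sq: "squarefree_mono g" and d: "mdeg n g = 2" and gm: "g \<in> monomials n"
    using V g by (auto simp: V_def f_ideal_def sqfree_monomial_ideal_def monomial_ideal_def mingens_def)
  have s: "sigma g \<subseteq> {1..n}" using gm by (rule sigma_sub)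
  have e: "g = ind (sigma g)" using sq by (rule sqf_ind)
  have "card (sigma g) = 2" using mdeg_ind[OF s] d e by simp
  then obtain x y where xy: "sigma g = {x,y}" "x \<noteq> y" by (auto simp: card_2_iff)
  show ?thesis using xy s e by (intro exI[of _ x] exI[of _ y]) (auto simp: xx_ind)
qed

lemma V_xx:
  assumes V: "I \<in> V n 2" and ij: "i\<noteq>j" "i\<in>{1..n}" "j\<in>{1..n}" and x: "xx i j \<in> I"
  shows "xx i j \<in> mingens I"
proof -
  obtain g where g: "g \<in> mingens I" "mdvd g (xx i j)" using gen_below[OF V_mi[OF V] x] by blast
  obtain a b where ab: "a\<noteq>b" "a\<in>{1..n}" "b\<in>{1..n}" "g = xx a b" using V_gen[OF V g(1)] by blast
  have "g = xx i j"
    using mono_eq[OF xx_monos[OF ij(2,3)] xx_monos[OF ab(2,3)]] g(2) ab mdeg_xx ij by metis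
  thus ?thesis using g by simp
qed

lemma V_ind:
  assumes V: "I \<in> V n 2" and F: "F \<subseteq> {1..n}"
  shows "ind F \<in> I \<longleftrightarrow> (\<exists>i\<in>F. \<exists>j\<in>F. i \<noteq> j \<and> xx i j \<in> I)"
proof
  assume "ind F \<in> I"
  then obtain g where g: "g \<in> mingens I" "mdvd g (ind F)" using gen_below[OF V_mi[OF V]] by blast
  obtain a b where ab: "a\<noteq>b" "a\<in>{1..n}" "b\<in>{1..n}" "g = xx a b" using V_gen[OF V g(1)] by blast
  have "a \<in> F" using g(2) ab unfolding mdvd_def
    by (metis (full_types) ind_def insertI1 xx_ind zero_neq_one not_one_le_zero)
  moreover have "b \<in> F" using g(2) ab unfolding mdvd_def
    by (metis (full_types) ind_def insertI1 insert_commute xx_ind zero_neq_one not_one_le_zero)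
  moreover have "xx a b \<in> I" using g ab by (simp add: mingens_def)
  ultimately show "\<exists>i\<in>F. \<exists>j\<in>F. i \<noteq> j \<and> xx i j \<in> I" using ab by blast
next
  assume "\<exists>i\<in>F. \<exists>j\<in>F. i \<noteq> j \<and> xx i j \<in> I"
  then obtain i j where ij: "i\<in>F" "j\<in>F" "xx i j \<in> I" by blast
  have "mdvd (xx i j) (ind F)" using ij by (auto simp: mdvd_def xx_def ind_def)
  thus "ind F \<in> I" using V_mi[OF V] ij ind_monos[OF F] unfolding monomial_ideal_def by blast
qed



definition Rg :: "nat \<Rightarrow> monomial set \<Rightarrow> (nat\<times>nat) set" where
  "Rg n I = {(i,j). i\<in>{1..n} \<and> j\<in>{1..n} \<and> i\<noteq>j \<and> xx i j \<notin> I}"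
definition Eg :: "nat \<Rightarrow> monomial set \<Rightarrow> (nat\<times>nat) set" where
  "Eg n I = {(i,j). i\<in>{1..n} \<and> j\<in>{1..n} \<and> i\<noteq>j \<and> xx i j \<in> I}"
definition pr :: "nat\<times>nat \<Rightarrow> nat set" where "pr = (\<lambda>(i,j). {i,j})"

lemma card_pairs:
  fixes X :: "(nat\<times>nat) set"
  assumes fin: "finite X" and sym: "\<And>x y. (x,y)\<in>X \<Longrightarrow> (y,x)\<in>X" and irr: "\<And>x. (x,x)\<notin>X"
  shows "card X = 2 * card (pr ` X)"
proof -
  define X1 where "X1 = {(x,y)\<in>X. x<y}"
  define X2 where "X2 = {(x,y)\<in>X. y<x}"
  have XU: "X = X1 \<union> X2" using irr unfolding X1_def X2_def by (auto simp: neq_iff) (metis neq_iff)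
  have "X1 \<subseteq> X" "X2 \<subseteq> X" unfolding X1_def X2_def by auto
  hence fin12: "finite X1" "finite X2" using fin finite_subset by auto
  have d: "X1 \<inter> X2 = {}" unfolding X1_def X2_def by auto
  have c12: "card X2 = card X1"
  proof -
    have "(\<lambda>(x,y). (y,x)) ` X1 = X2" unfolding X1_def X2_def using sym by (auto simp: image_iff)
    moreover have "inj_on (\<lambda>(x,y). (y,x)) X1" by (auto simp: inj_on_def)
    ultimately show ?thesis by (metis card_image)
  qed
  have im: "pr ` X = pr ` X1"
  proof
    show "pr ` X1 \<subseteq> pr ` X" unfolding X1_def by auto
    show "pr ` X \<subseteq> pr ` X1"
    proof
      fix F assume "F \<in> pr ` X"
      then obtain x y where xy: "(x,y)\<in>X" "F = {x,y}" by (auto simp: pr_def)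
      show "F \<in> pr ` X1"
      proof (cases "x < y")
        case True thus ?thesis using xy unfolding X1_def pr_def by (auto simp: image_iff)
      next
        case False
        hence "y < x" using irr xy by (metis neq_iff)
        hence "(y,x) \<in> X1" "F = pr (y,x)" using xy sym unfolding X1_def pr_def by auto
        thus ?thesis by blast
      qed
    qed
  qed
  have inj: "inj_on pr X1"
  proof
    fix p q assume p: "p \<in> X1" and q: "q \<in> X1" and e: "pr p = pr q"
    obtain a b where ab: "p = (a,b)" "a < b" using p X1_def by auto
    obtain c d where cd: "q = (c,d)" "c < d" using q X1_def by auto
    have "{a,b} = {c,d}" using e ab cd by (simp add: pr_def)
    thus "p = q" using ab cd by (auto simp: doubleton_eq_iff)
  qed
  have "card X = card X1 + card X2" using XU fin12 d card_Un_disjoint by metis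
  also have "\<dots> = 2 * card (pr ` X1)" using c12 card_image[OF inj] by simp
  finally show ?thesis using im by simp
qed

lemma facet_char:
  assumes V: "I \<in> V n 2"
  shows "facet_complex I = {F. \<exists>i j. i\<noteq>j \<and> i\<in>{1..n} \<and> j\<in>{1..n} \<and> xx i j \<in> I \<and> F \<subseteq> {i,j}}"
proof (rule set_eqI, rule iffI)
  fix F assume "F \<in> facet_complex I"
  then obtain g where g: "g \<in> mingens I" "F \<subseteq> sigma g" by (auto simp: facet_complex_def)
  obtain i j where ij: "i\<noteq>j" "i\<in>{1..n}" "j\<in>{1..n}" "g = xx i j" using V_gen[OF V g(1)] by blast
  have "xx i j \<in> I" using g ij by (simp add: mingens_def)
  thus "F \<in> {F. \<exists>i j. i\<noteq>j \<and> i\<in>{1..n} \<and> j\<in>{1..n} \<and> xx i j \<in> I \<and> F \<subseteq> {i,j}}"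
    using ij g by (auto simp: xx_ind)
next
  fix F assume "F \<in> {F. \<exists>i j. i\<noteq>j \<and> i\<in>{1..n} \<and> j\<in>{1..n} \<and> xx i j \<in> I \<and> F \<subseteq> {i,j}}"
  then obtain i j where ij: "i\<noteq>j" "i\<in>{1..n}" "j\<in>{1..n}" "xx i j \<in> I" "F \<subseteq> {i,j}" by blast
  have "xx i j \<in> mingens I" using V_xx[OF V ij(1-4)] .
  moreover have "F \<subseteq> sigma (xx i j)" using ij by (simp add: xx_ind)
  ultimately show "F \<in> facet_complex I" by (auto simp: facet_complex_def)
qed

lemma SR_char:
  assumes V: "I \<in> V n 2"
  shows "SR_complex n I = {F. F \<subseteq> {1..n} \<and> \<not>(\<exists>i\<in>F. \<exists>j\<in>F. i\<noteq>j \<and> xx i j \<in> I)}"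
proof (rule set_eqI, rule iffI)
  fix F assume "F \<in> SR_complex n I"
  then obtain g where g: "F = sigma g" "g \<in> monomials n" "squarefree_mono g" "g \<notin> I"
    by (auto simp: SR_complex_def)
  have s: "F \<subseteq> {1..n}" using g sigma_sub by auto
  have "g = ind F" using g sqf_ind by auto
  thus "F \<in> {F. F \<subseteq> {1..n} \<and> \<not>(\<exists>i\<in>F. \<exists>j\<in>F. i\<noteq>j \<and> xx i j \<in> I)}"
    using V_ind[OF V s] g s by auto
next
  fix F assume F: "F \<in> {F. F \<subseteq> {1..n} \<and> \<not>(\<exists>i\<in>F. \<exists>j\<in>F. i\<noteq>j \<and> xx i j \<in> I)}"
  hence s: "F \<subseteq> {1..n}" by simp
  have "ind F \<notin> I" using V_ind[OF V s] F by auto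
  thus "F \<in> SR_complex n I" unfolding SR_complex_def
    using ind_monos[OF s] sqf_ind2[of F] sigma_ind[of F] by blast
qed

lemma SR_fin: "I \<in> V n 2 \<Longrightarrow> finite (SR_complex n I)"
  by (rule finite_subset[of _ "Pow {1..n}"]) (auto simp: SR_char)

lemma facet2: "I \<in> V n 2 \<Longrightarrow> {F\<in>facet_complex I. card F = 2} = pr ` Eg n I"
proof (rule set_eqI, rule iffI)
  fix F assume V: "I \<in> V n 2" and "F \<in> {F\<in>facet_complex I. card F = 2}"
  then obtain i j where ij: "i\<noteq>j" "i\<in>{1..n}" "j\<in>{1..n}" "xx i j \<in> I" "F \<subseteq> {i,j}" "card F = 2"
    by (auto simp: facet_char[OF V])
  have "F = {i,j}" using card_subset_eq[of "{i,j}" F] ij by auto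
  thus "F \<in> pr ` Eg n I" using ij unfolding Eg_def pr_def by (auto simp: image_iff)
next
  fix F assume V: "I \<in> V n 2" and "F \<in> pr ` Eg n I"
  then obtain i j where ij: "i\<noteq>j" "i\<in>{1..n}" "j\<in>{1..n}" "xx i j \<in> I" "F = {i,j}"
    by (auto simp: Eg_def pr_def)
  thus "F \<in> {F\<in>facet_complex I. card F = 2}" by (auto simp: facet_char[OF V])
qed

lemma SR2: "I \<in> V n 2 \<Longrightarrow> {F\<in>SR_complex n I. card F = 2} = pr ` Rg n I"
proof (rule set_eqI, rule iffI)
  fix F assume V: "I \<in> V n 2" and F: "F \<in> {F\<in>SR_complex n I. card F = 2}"
  then obtain i j where ij: "F = {i,j}" "i\<noteq>j" by (auto simp: card_2_iff)
  have "F \<subseteq> {1..n}" "xx i j \<notin> I" using F ij by (auto simp: SR_char[OF V])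
  thus "F \<in> pr ` Rg n I" using ij unfolding Rg_def pr_def by (auto simp: image_iff)
next
  fix F assume V: "I \<in> V n 2" and "F \<in> pr ` Rg n I"
  then obtain i j where ij: "i\<noteq>j" "i\<in>{1..n}" "j\<in>{1..n}" "xx i j \<notin> I" "F = {i,j}"
    by (auto simp: Rg_def pr_def)
  thus "F \<in> {F\<in>SR_complex n I. card F = 2}" using xx_sym by (auto simp: SR_char[OF V])
qed

lemma V_tri:
  assumes V: "I \<in> V n 2" and "(i,j) \<in> Rg n I" "(j,k) \<in> Rg n I" "(i,k) \<in> Rg n I"
  shows False
proof -
  have h: "i\<in>{1..n}" "j\<in>{1..n}" "k\<in>{1..n}" "i\<noteq>j" "j\<noteq>k" "i\<noteq>k"
     "xx i j \<notin> I" "xx j k \<notin> I" "xx i k \<notin> I" using assms by (auto simp: Rg_def)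
  have h2: "xx j i \<notin> I" "xx k j \<notin> I" "xx k i \<notin> I" using h xx_sym by metis+
  have "{i,j,k} \<in> {F\<in>SR_complex n I. card F = 3}"
    using h h2 by (auto simp: SR_char[OF V])
  moreover have "finite {F\<in>SR_complex n I. card F = 3}" using SR_fin[OF V] by simp
  ultimately have "fvec (SR_complex n I) 3 \<noteq> 0" unfolding fvec_def by (metis card_0_eq empty_iff)
  moreover have "fvec (facet_complex I) 3 = 0"
  proof -
    have "{F\<in>facet_complex I. card F = 3} = {}"
    proof -
    { fix F assume "F \<in> facet_complex I" "card F = 3"
      then obtain a b where "F \<subseteq> {a,b}" by (auto simp: facet_char[OF V])
      hence "card F \<le> card {a,b}" by (intro card_mono) auto
      also have "\<dots> \<le> 2" by (simp add: card_insert_le_m1)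
      finally have False using \<open>card F = 3\<close> by simp }
    thus ?thesis by auto
    qed
    thus ?thesis unfolding fvec_def by (simp only: card.empty)
  qed
  moreover have "fvec (facet_complex I) 3 = fvec (SR_complex n I) 3"
    using V by (simp add: V_def f_ideal_def)
  ultimately show False by simp
qed

lemma V_nonempty:
  assumes V: "I \<in> V n 2" shows "mingens I \<noteq> {}"
proof
  assume e: "mingens I = {}"
  hence "I = {}" using gen_below[OF V_mi[OF V]] by blast
  have "facet_complex I = {}" using e by (simp add: facet_complex_def)
  hence "fvec (facet_complex I) 0 = 0" by (simp add: fvec_def)
  moreover have "fvec (SR_complex n I) 0 \<noteq> 0"
  proof -
    have mem: "{} \<in> {F\<in>SR_complex n I. card F = 0}" by (auto simp: SR_char[OF V])
    have fin0: "finite {F\<in>SR_complex n I. card F = 0}" using SR_fin[OF V] by simp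
    show ?thesis unfolding fvec_def using card_0_eq[OF fin0] mem by blast
  qed
  moreover have "fvec (facet_complex I) 0 = fvec (SR_complex n I) 0"
    using V by (simp add: V_def f_ideal_def)
  ultimately show False by simp
qed

lemma V_graph:
  assumes V: "I \<in> V n 2"
  shows "Rg n I \<subseteq> {1..n} \<times> {1..n}" and "\<And>x y. (x,y) \<in> Rg n I \<Longrightarrow> (y,x) \<in> Rg n I"
    and "\<And>x. (x,x) \<notin> Rg n I"
    and "2 * card (Rg n I) = n * (n - 1)" and "n \<ge> 3"
proof -
  show RV: "Rg n I \<subseteq> {1..n} \<times> {1..n}" by (auto simp: Rg_def)
  show sy: "\<And>x y. (x,y) \<in> Rg n I \<Longrightarrow> (y,x) \<in> Rg n I"
  proof -
    fix x y assume "(x,y) \<in> Rg n I"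
    moreover have "xx y x = xx x y" by (rule xx_sym)
    ultimately show "(y,x) \<in> Rg n I" by (auto simp: Rg_def)
  qed
  show ir: "\<And>x. (x,x) \<notin> Rg n I" by (auto simp: Rg_def)
  have finR: "finite (Rg n I)" using RV finite_subset by blast
  have EV: "Eg n I \<subseteq> {1..n} \<times> {1..n}" by (auto simp: Eg_def)
  have finE: "finite (Eg n I)" using EV finite_subset by blast
  have syE: "\<And>x y. (x,y) \<in> Eg n I \<Longrightarrow> (y,x) \<in> Eg n I"
  proof -
    fix x y assume "(x,y) \<in> Eg n I"
    moreover have "xx y x = xx x y" by (rule xx_sym)
    ultimately show "(y,x) \<in> Eg n I" by (auto simp: Eg_def)
  qed
  have cE: "card (Eg n I) = 2 * card (pr ` Eg n I)"
    using card_pairs[OF finE syE] by (auto simp: Eg_def)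
  have cR: "card (Rg n I) = 2 * card (pr ` Rg n I)" using card_pairs[OF finR sy ir] .
  have "fvec (facet_complex I) 2 = fvec (SR_complex n I) 2"
    using V by (simp add: V_def f_ideal_def)
  hence eq: "card (pr ` Eg n I) = card (pr ` Rg n I)"
    unfolding fvec_def facet2[OF V] SR2[OF V] .
  have "Eg n I \<union> Rg n I = Sigma {1..n} (\<lambda>i. {1..n} - {i})" by (auto simp: Eg_def Rg_def)
  moreover have "Eg n I \<inter> Rg n I = {}" by (auto simp: Eg_def Rg_def)
  ultimately have "card (Eg n I) + card (Rg n I) = card (Sigma {1..n} (\<lambda>i. {1..n} - {i}))"
    using finE finR by (metis card_Un_disjoint)
  also have "\<dots> = n * (n - 1)" by simp
  finally have sum: "card (Eg n I) + card (Rg n I) = n * (n - 1)" .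
  show c2: "2 * card (Rg n I) = n * (n - 1)" using sum cE cR eq by simp
  obtain g where "g \<in> mingens I" using V_nonempty[OF V] by blast
  then obtain i j where "i\<noteq>j" "i\<in>{1..n}" "j\<in>{1..n}" using V_gen[OF V] by blast
  hence n2: "n \<ge> 2" by auto
  have "4 * card (pr ` Rg n I) = n * (n - 1)" using c2 cR by simp
  thus "n \<ge> 3" using n2 by (cases "n = 2") auto
qed



lemma W_sub_V: "I \<in> W n l \<Longrightarrow> I \<in> V n 2"
  by (auto simp: W_def V_def)

lemma ltype_of_part:
  assumes V: "I \<in> V n 2" and XY: "X \<union> Y = {1..n}" "X \<inter> Y = {}" "X \<noteq> {}" "Y \<noteq> {}"
   and nX: "\<forall>x\<in>X. \<forall>y\<in>X. (x,y) \<notin> Rg n I" and nY: "\<forall>x\<in>Y. \<forall>y\<in>Y. (x,y) \<notin> Rg n I"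
  shows "l_type n (card X) I"
  unfolding l_type_def
proof (intro exI[of _ X] conjI)
  show Xs: "X \<subseteq> {1..n}" using XY by auto
  show "X \<noteq> {}" by fact
  show "X \<noteq> {1..n}" using XY by auto
  show "card X = card X" ..
  show "W_B n X \<subseteq> mingens I"
  proof
    fix g assume "g \<in> W_B n X"
    then obtain i j where ij: "g = xx i j" "i \<noteq> j" "(i \<in> X \<and> j \<in> X) \<or> (i \<in> {1..n} - X \<and> j \<in> {1..n} - X)"
      by (auto simp: W_B_def)
    have ijn: "i \<in> {1..n}" "j \<in> {1..n}" using ij Xs by auto
    have "(i,j) \<notin> Rg n I"
    proof (cases "i \<in> X \<and> j \<in> X")
      case True thus ?thesis using nX by auto
    next
      case False
      hence "i \<in> Y" "j \<in> Y" using ij XY by auto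
      thus ?thesis using nY by auto
    qed
    hence "xx i j \<in> I" using ijn ij by (auto simp: Rg_def)
    thus "g \<in> mingens I" using V_xx[OF V ij(2) ijn] ij by simp
  qed
qed

lemma V_in_W:
  assumes V: "I \<in> V n 2" and n5: "n \<noteq> 5"
  shows "\<exists>l\<in>{1..n div 2}. I \<in> W n l"
proof -
  note G = V_graph[OF V]
  have ne: "Rg n I \<noteq> {}"
  proof
    assume "Rg n I = {}"
    hence "n * (n - 1) = 0" using G(4) by simp
    thus False using G(5) by simp
  qed
  have tri: "\<And>x y z. (x,y)\<in>Rg n I \<Longrightarrow> (y,z)\<in>Rg n I \<Longrightarrow> (x,z)\<in>Rg n I \<Longrightarrow> False"
    using V_tri[OF V] by blast
  obtain A B where AB: "A \<union> B = {1..n}" "A \<inter> B = {}" "A \<noteq> {}" "B \<noteq> {}"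
    "\<forall>x\<in>A. \<forall>y\<in>A. (x,y)\<notin>Rg n I" "\<forall>x\<in>B. \<forall>y\<in>B. (x,y)\<notin>Rg n I"
  proof -
    have c: "2 * card (Rg n I) = card {1..n} * (card {1..n} - 1)" using G(4) by simp
    have c5: "card {1..n} \<noteq> 5" using n5 by simp
    have s1: "Rg n I \<subseteq> {1..n}\<times>{1..n}" by (rule G(1))
    have s2: "\<And>x y. (x,y)\<in>Rg n I \<Longrightarrow> (y,x)\<in>Rg n I" by (rule G(2))
    have s3: "\<And>x. (x,x)\<notin>Rg n I" by (rule G(3))
    have ex: "\<exists>A B. A \<union> B = {1..n} \<and> A \<inter> B = {} \<and> A \<noteq> {} \<and> B \<noteq> {} \<and>
     (\<forall>x\<in>A. \<forall>y\<in>A. (x,y)\<notin>Rg n I) \<and> (\<forall>x\<in>B. \<forall>y\<in>B. (x,y)\<notin>Rg n I)"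
      apply (rule bip_lemma[of "{1..n}" "Rg n I"])
      apply (rule finite_atLeastAtMost)
      apply (rule s1)
      apply (erule s2)
      apply (rule s3)
      apply (erule tri, assumption, assumption)
      apply (rule c)
      apply (rule c5)
      apply (rule ne)
      done
    from ex show ?thesis
      apply (elim exE conjE)
      apply (rule that)
      apply assumption+
      done
  qed
  have finAB: "finite A" "finite B" using AB(1) finite_subset by (metis finite_atLeastAtMost sup_ge1 sup_ge2)+
  have cAB: "card A + card B = n" using card_Un_disjoint[OF finAB AB(2)] AB(1) by simp
  have pos: "card A \<ge> 1" "card B \<ge> 1" using finAB AB(3,4) by (auto simp: Suc_le_eq card_gt_0_iff)
  have WW: "I \<in> W n l" if "l_type n l I" for l
  proof -
    have "f_ideal n I" using V by (simp add: V_def)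
    moreover have "\<forall>g\<in>mingens I. squarefree_mono g \<and> mdeg n g = 2"
      using V by (auto simp: V_def f_ideal_def sqfree_monomial_ideal_def)
    ultimately show ?thesis using that by (simp add: W_def)
  qed
  show ?thesis
  proof (cases "card B \<le> n div 2")
    case True
    have "l_type n (card B) I" using ltype_of_part[OF V _ _ AB(4) AB(3) AB(6) AB(5)] AB(1,2) by (simp add: Un_commute Int_commute)
    hence "I \<in> W n (card B)" by (rule WW)
    thus ?thesis using True pos by (intro bexI[of _ "card B"]) auto
  next
    case False
    hence "card A \<le> n div 2" using cAB by linarith
    moreover have "l_type n (card A) I" using ltype_of_part[OF V AB] .
    moreover have "I \<in> W n (card A)" using \<open>l_type n (card A) I\<close> by (rule WW)
    ultimately show ?thesis using pos by (intro bexI[of _ "card A"]) auto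
  qed
qed

lemma W_disj:
  assumes I1: "I \<in> W n l1" and I2: "I \<in> W n l2" and l: "l1 \<le> n div 2" "l2 \<le> n div 2"
  shows "l1 = l2"
proof -
  have V: "I \<in> V n 2" using I1 W_sub_V by blast
  note G = V_graph[OF V]
  obtain B1 where B1: "B1 \<subseteq> {1..n}" "card B1 = l1" "W_B n B1 \<subseteq> mingens I"
    using I1 by (auto simp: W_def l_type_def)
  obtain B2 where B2: "B2 \<subseteq> {1..n}" "card B2 = l2" "W_B n B2 \<subseteq> mingens I"
    using I2 by (auto simp: W_def l_type_def)
  have cr: "(x\<in>B \<longleftrightarrow> y\<notin>B)" if "(x,y) \<in> Rg n I" "W_B n B \<subseteq> mingens I" for x y B
  proof (rule ccontr)
    assume "\<not> (x\<in>B \<longleftrightarrow> y\<notin>B)"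
    hence "(x \<in> B \<and> y \<in> B) \<or> (x \<in> {1..n} - B \<and> y \<in> {1..n} - B)" using that(1) by (auto simp: Rg_def)
    moreover have "x \<noteq> y" using that(1) by (auto simp: Rg_def)
    ultimately have "xx x y \<in> W_B n B" by (auto simp: W_B_def)
    hence "xx x y \<in> I" using that(2) by (auto simp: mingens_def)
    thus False using that(1) by (auto simp: Rg_def)
  qed
  have "(\<forall>x\<in>{1..n}. x\<in>B1 \<longleftrightarrow> x\<in>B2) \<or> (\<forall>x\<in>{1..n}. x\<in>B1 \<longleftrightarrow> x\<notin>B2)"
    by (rule cross_unique[of "{1..n}" "Rg n I"]) (use G cr B1 B2 in auto)
  thus ?thesis
  proof
    assume "\<forall>x\<in>{1..n}. x\<in>B1 \<longleftrightarrow> x\<in>B2"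
    hence "B1 = B2" using B1 B2 by blast
    thus ?thesis using B1 B2 by simp
  next
    assume "\<forall>x\<in>{1..n}. x\<in>B1 \<longleftrightarrow> x\<notin>B2"
    hence "B1 = {1..n} - B2" using B1 B2 by blast
    hence "l1 = n - l2" using B2 card_Diff_subset[of B2 "{1..n}"] finite_subset[OF B2(1)] B1(2) by simp
    moreover have "l2 \<le> n" using B2 card_mono[OF _ B2(1)] by fastforce
    ultimately show ?thesis using l by linarith
  qed
qed

theorem theorem4p6:
  fixes n :: nat
  assumes "n \<noteq> 5"
  shows "V n 2 = (\<Union>l\<in>{1..n div 2}. W n l)
    \<and> (\<forall>l1\<in>{1..n div 2}. \<forall>l2\<in>{1..n div 2}. l1 \<noteq> l2 \<longrightarrow> W n l1 \<inter> W n l2 = {})"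
proof
  show "V n 2 = (\<Union>l\<in>{1..n div 2}. W n l)"
    using V_in_W[OF _ assms] W_sub_V by blast
  show "\<forall>l1\<in>{1..n div 2}. \<forall>l2\<in>{1..n div 2}. l1 \<noteq> l2 \<longrightarrow> W n l1 \<inter> W n l2 = {}"
    using W_disj by fastforce
qed


end
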